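(* Consider a one-site PTM cascade with $n\ge1$ layers. Fix all rate constants and all total amounts (all positive) except $\overline{S}_i$ for some $i\in\{1,\dots,n\}$. Then, as $\overline{S}_i$ increases, the BMSS values of $S_j^1$, $Y_j^0$ and $Y_j^1$ strictly increase for every $j=i,\dots,n$.
   Context: A one-site PTM cascade with $n$ layers has species $E=S_0^1$ and, for $i=1,\dots,n$, $S_i^0,S_i^1,F_i,Y_i^0,Y_i^1$, with reactions $S_{i-1}^1+S_i^0 \rightleftharpoons Y_i^0 \to S_{i-1}^1+S_i^1$ (rate constants $a_i^0,b_i^0,c_i^0$) and $F_i+S_i^1\rightleftharpoons Y_i^1\to F_i+S_i^0$ (rate constants $a_i^1,b_i^1,c_i^1$), all positive, mass-action kinetics. Put $\delta_i=a_i^1/(b_i^1+c_i^1)$, $\gamma_i=(c_i^1/c_i^0)\delta_i$, $\lambda_i=\frac{b_i^0+c_i^0}{a_i^0}\gamma_i$. Given total amounts $\overline{E},\overline{F}_i,\overline{S}_i$, a steady state is a real solution of: $Y_i^0=\gamma_iF_iS_i^1$, $Y_i^1=\delta_iF_iS_i^1$, $\lambda_iF_iS_i^1=S_i^0S_{i-1}^1$, $\overline{F}_i=F_i+Y_i^1$, $\overline{S}_i=S_i^0+S_i^1+Y_i^0+Y_i^1+Y_{i+1}^0$ ($i=1,\dots,n$, $Y_{n+1}^0:=0$), $\overline{E}=E+Y_1^0$. A BMSS is a steady state with positive total amounts and all concentrations nonnegative; for positive total amounts it exists and is unique. *)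

theory Defs
  imports Complex_Main
begin

text \<open>Indices i = 1..n; the function arguments at
other indices are irrelevant.  Rate constants a0 i, b0 i, c0 i (modification of layer i by
the enzyme S_(i-1)^1) and a1 i, b1 i, c1 i (demodification by F_i).  Concentrations
S0 i = S_i^0, S1 i = S_i^1 (with S1 0 = E), F i, Y0 i = Y_i^0, Y1 i = Y_i^1.\<close>

definition delta :: "(nat \<Rightarrow> real) \<Rightarrow> (nat \<Rightarrow> real) \<Rightarrow> (nat \<Rightarrow> real) \<Rightarrow> nat \<Rightarrow> real" where
  "delta a1 b1 c1 i = a1 i / (b1 i + c1 i)"

definition gamma :: "(nat \<Rightarrow> real) \<Rightarrow> (nat \<Rightarrow> real) \<Rightarrow> (nat \<Rightarrow> real) \<Rightarrow> (nat \<Rightarrow> real) \<Rightarrow> nat \<Rightarrow> real" where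
  "gamma c0 a1 b1 c1 i = (c1 i / c0 i) * delta a1 b1 c1 i"

definition lambda :: "(nat \<Rightarrow> real) \<Rightarrow> (nat \<Rightarrow> real) \<Rightarrow> (nat \<Rightarrow> real) \<Rightarrow> (nat \<Rightarrow> real) \<Rightarrow> (nat \<Rightarrow> real) \<Rightarrow> (nat \<Rightarrow> real) \<Rightarrow> nat \<Rightarrow> real" where
  "lambda a0 b0 c0 a1 b1 c1 i = ((b0 i + c0 i) / a0 i) * gamma c0 a1 b1 c1 i"

definition steady_state ::
  "nat \<Rightarrow> (nat \<Rightarrow> real) \<Rightarrow> (nat \<Rightarrow> real) \<Rightarrow> (nat \<Rightarrow> real) \<Rightarrow> (nat \<Rightarrow> real) \<Rightarrow> (nat \<Rightarrow> real) \<Rightarrow> (nat \<Rightarrow> real)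
   \<Rightarrow> real \<Rightarrow> (nat \<Rightarrow> real) \<Rightarrow> (nat \<Rightarrow> real)
   \<Rightarrow> (nat \<Rightarrow> real) \<Rightarrow> (nat \<Rightarrow> real) \<Rightarrow> (nat \<Rightarrow> real) \<Rightarrow> (nat \<Rightarrow> real) \<Rightarrow> (nat \<Rightarrow> real) \<Rightarrow> bool" where
  "steady_state n a0 b0 c0 a1 b1 c1 Ebar Fbar Sbar S0 S1 F Y0 Y1 \<longleftrightarrow>
     (\<forall>i\<in>{1..n}.
        Y0 i = gamma c0 a1 b1 c1 i * F i * S1 i \<and>
        Y1 i = delta a1 b1 c1 i * F i * S1 i \<and>
        lambda a0 b0 c0 a1 b1 c1 i * F i * S1 i = S0 i * S1 (i - 1) \<and>
        Fbar i = F i + Y1 i \<and>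
        Sbar i = S0 i + S1 i + Y0 i + Y1 i + (if i < n then Y0 (i + 1) else 0)) \<and>
     Ebar = S1 0 + Y0 1"

definition is_BMSS ::
  "nat \<Rightarrow> (nat \<Rightarrow> real) \<Rightarrow> (nat \<Rightarrow> real) \<Rightarrow> (nat \<Rightarrow> real) \<Rightarrow> (nat \<Rightarrow> real) \<Rightarrow> (nat \<Rightarrow> real) \<Rightarrow> (nat \<Rightarrow> real)
   \<Rightarrow> real \<Rightarrow> (nat \<Rightarrow> real) \<Rightarrow> (nat \<Rightarrow> real)
   \<Rightarrow> (nat \<Rightarrow> real) \<Rightarrow> (nat \<Rightarrow> real) \<Rightarrow> (nat \<Rightarrow> real) \<Rightarrow> (nat \<Rightarrow> real) \<Rightarrow> (nat \<Rightarrow> real) \<Rightarrow> bool" where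
  "is_BMSS n a0 b0 c0 a1 b1 c1 Ebar Fbar Sbar S0 S1 F Y0 Y1 \<longleftrightarrow>
     steady_state n a0 b0 c0 a1 b1 c1 Ebar Fbar Sbar S0 S1 F Y0 Y1 \<and>
     Ebar > 0 \<and> (\<forall>i\<in>{1..n}. Fbar i > 0 \<and> Sbar i > 0) \<and>
     S1 0 \<ge> 0 \<and>
     (\<forall>i\<in>{1..n}. S0 i \<ge> 0 \<and> S1 i \<ge> 0 \<and> F i \<ge> 0 \<and> Y0 i \<ge> 0 \<and> Y1 i \<ge> 0)"

end

theory Submission
  imports Defs
begin

lemma consts_pos:
  assumes "p k > 0" "q k > 0" "r k > 0" "u k > 0" "v k > 0" "w k > 0"
  shows "delta u v w k > 0" "gamma r u v w k > 0" "lambda p q r u v w k > 0"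
  using assms by (simp_all add: delta_def gamma_def lambda_def)

lemma core:
  fixes l c Sb Sb' S0 S0' x x' P P' T T' y y' :: real
  assumes "l>0" "c>0" "Sb \<le> Sb'" "Sb = S0 + x + c*P + T" "Sb' = S0' + x' + c*P' + T'"
    "l*P = S0*y" "l*P' = S0'*y'" "S0>0" "y>0" "x' \<le> x" "P' \<le> P" "T' \<le> T" "y \<le> y'"
    "Sb < Sb' \<or> x' < x \<or> T' < T \<or> y < y'"
  shows False
proof -
  have cP: "c*P' \<le> c*P" using assms(2,11) by simp
  have s: "S0 \<le> S0'" using assms(3,4,5,10,12) cP by linarith
  have s': "Sb < Sb' \<or> x' < x \<or> T' < T \<Longrightarrow> S0 < S0'" using assms(3,4,5,10,12) cP by linarith
  have "S0*y < S0'*y'"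
  proof (cases "y < y'")
    case True
    have "S0*y < S0*y'" using True assms(8) by simp
    also have "\<dots> \<le> S0'*y'" using s assms(9,13) by (intro mult_right_mono) auto
    finally show ?thesis .
  next
    case False
    then have "S0 < S0'" using s' assms(14) by blast
    then have "S0*y < S0'*y" using assms(9) by simp
    also have "\<dots> \<le> S0'*y'" using s assms(8,13) by (intro mult_left_mono) auto
    finally show ?thesis .
  qed
  then have "l*P < l*P'" using assms(6,7) by simp
  then have "P < P'" using assms(1) by simp
  then show False using assms(11) by simp
qed

lemma FS_identity:
  fixes F F' x x' d Fb :: real
  assumes "Fb = F + d*F*x" "Fb = F' + d*F'*x'"
  shows "(F*x - F'*x') * ((1 + d*x) * (1 + d*x')) = Fb * (x - x')"
proof -
  have a: "F*(1+d*x) = Fb" "F'*(1+d*x') = Fb" using assms by (simp_all add: algebra_simps)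
  have "(F*x - F'*x') * ((1 + d*x) * (1 + d*x')) = (F*(1+d*x))*x*(1+d*x') - (F'*(1+d*x'))*x'*(1+d*x)"
    by (simp add: algebra_simps)
  also have "\<dots> = Fb * (x - x')" unfolding a by (simp add: algebra_simps)
  finally show ?thesis .
qed

lemma FS_mono:
  fixes F F' x x' d Fb :: real
  assumes "Fb = F + d*F*x" "Fb = F' + d*F'*x'" "d > 0" "x \<ge> 0" "x' \<ge> 0" "Fb > 0"
  shows "F*x \<le> F'*x' \<longleftrightarrow> x \<le> x'" "F*x < F'*x' \<longleftrightarrow> x < x'"
proof -
  have id: "(F*x - F'*x') * ((1 + d*x) * (1 + d*x')) = Fb * (x - x')"
    using FS_identity[OF assms(1,2)] .
  have pos: "(1 + d*x) * (1 + d*x') > 0" using assms(3,4,5)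
    by (simp add: add_pos_nonneg)
  have "F*x - F'*x' \<le> 0 \<longleftrightarrow> x - x' \<le> 0"
  proof -
    have "F*x - F'*x' \<le> 0 \<longleftrightarrow> (F*x - F'*x') * ((1 + d*x) * (1 + d*x')) \<le> 0"
      using mult_le_cancel_right_pos[OF pos, of "F*x - F'*x'" 0] by simp
    also have "\<dots> \<longleftrightarrow> x - x' \<le> 0" using id mult_le_cancel_left_pos[OF assms(6), of "x - x'" 0] by simp
    finally show ?thesis .
  qed
  then show "F*x \<le> F'*x' \<longleftrightarrow> x \<le> x'" by simp
  have "F*x - F'*x' < 0 \<longleftrightarrow> x - x' < 0"
  proof -
    have "F*x - F'*x' < 0 \<longleftrightarrow> (F*x - F'*x') * ((1 + d*x) * (1 + d*x')) < 0"
      using mult_less_cancel_right_pos[OF pos, of "F*x - F'*x'" 0] by simp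
    also have "\<dots> \<longleftrightarrow> x - x' < 0" using id mult_less_cancel_left_pos[OF assms(6), of "x - x'" 0] by simp
    finally show ?thesis .
  qed
  then show "F*x < F'*x' \<longleftrightarrow> x < x'" by simp
qed

lemma bmss_pos:
  assumes B: "is_BMSS n a0 b0 c0 a1 b1 c1 Ebar Fbar Sbar S0 S1 F Y0 Y1"
    and n1: "n \<ge> 1"
    and pos: "\<forall>k\<in>{1..n}. a0 k > 0 \<and> b0 k > 0 \<and> c0 k > 0 \<and> a1 k > 0 \<and> b1 k > 0 \<and> c1 k > 0"
  shows "\<forall>k\<in>{1..n}. F k > 0" "\<forall>k\<le>n. S1 k > 0" "\<forall>k\<in>{1..n}. S0 k > 0"
proof -
  have cp: "\<And>k. k\<in>{1..n} \<Longrightarrow> delta a1 b1 c1 k > 0 \<and> gamma c0 a1 b1 c1 k > 0 \<and> lambda a0 b0 c0 a1 b1 c1 k > 0"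
  proof -
    fix k assume "k\<in>{1..n}"
    then have h: "a0 k > 0" "b0 k > 0" "c0 k > 0" "a1 k > 0" "b1 k > 0" "c1 k > 0" using pos by auto
    show "delta a1 b1 c1 k > 0 \<and> gamma c0 a1 b1 c1 k > 0 \<and> lambda a0 b0 c0 a1 b1 c1 k > 0"
      using consts_pos[where p=a0 and q=b0 and r=c0 and u=a1 and v=b1 and w=c1 and k=k, OF h] by simp
  qed
  have B1: "steady_state n a0 b0 c0 a1 b1 c1 Ebar Fbar Sbar S0 S1 F Y0 Y1"
    and BB: "Ebar > 0" "\<forall>i\<in>{1..n}. Fbar i > 0 \<and> Sbar i > 0" "S1 0 \<ge> 0"
      "\<forall>i\<in>{1..n}. S0 i \<ge> 0 \<and> S1 i \<ge> 0 \<and> F i \<ge> 0 \<and> Y0 i \<ge> 0 \<and> Y1 i \<ge> 0"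
    using B unfolding is_BMSS_def by blast+
  have ss: "\<And>k. k\<in>{1..n} \<Longrightarrow> Y0 k = gamma c0 a1 b1 c1 k * F k * S1 k \<and>
        Y1 k = delta a1 b1 c1 k * F k * S1 k \<and>
        lambda a0 b0 c0 a1 b1 c1 k * F k * S1 k = S0 k * S1 (k - 1) \<and>
        Fbar k = F k + Y1 k \<and>
        Sbar k = S0 k + S1 k + Y0 k + Y1 k + (if k < n then Y0 (k + 1) else 0)"
    using bspec[OF conjunct1[OF B1[unfolded steady_state_def]]] by blast
  have E: "Ebar = S1 0 + Y0 1" "Ebar > 0" "S1 0 \<ge> 0"
    using conjunct2[OF B1[unfolded steady_state_def]] BB by auto
  have nn: "\<And>k. k\<in>{1..n} \<Longrightarrow> S0 k \<ge> 0 \<and> S1 k \<ge> 0 \<and> F k \<ge> 0 \<and> Y0 k \<ge> 0 \<and> Y1 k \<ge> 0 \<and> Fbar k > 0 \<and> Sbar k > 0"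
    using BB by auto
  show Fp: "\<forall>k\<in>{1..n}. F k > 0"
  proof
    fix k assume k: "k\<in>{1..n}"
    have "Fbar k = F k * (1 + delta a1 b1 c1 k * S1 k)" using ss[OF k] by (simp add: algebra_simps)
    then have "F k \<noteq> 0" using nn[OF k] by auto
    then show "F k > 0" using nn[OF k] by auto
  qed
  have zero: "\<And>k. k\<in>{1..n} \<Longrightarrow> S1 (k-1) = 0 \<Longrightarrow> S1 k = 0"
  proof -
    fix k assume k: "k\<in>{1..n}" and z: "S1 (k-1) = 0"
    have "lambda a0 b0 c0 a1 b1 c1 k * F k * S1 k = 0" using ss[OF k] z by simp
    moreover have "F k > 0" using Fp k by blast
    ultimately show "S1 k = 0" using cp[OF k] by simp
  qed
  have S10: "S1 0 > 0"
  proof (rule ccontr)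
    assume "\<not> S1 0 > 0"
    then have "S1 0 = 0" using E by simp
    then have "S1 1 = 0" using zero[of 1] n1 by simp
    then have "Y0 1 = 0" using ss[of 1] n1 by simp
    then show False using E `S1 0 = 0` by simp
  qed
  have "\<forall>k. k \<le> n \<longrightarrow> S1 k > 0"
  proof
    fix k show "k \<le> n \<longrightarrow> S1 k > 0"
    proof (induction k)
      case 0 then show ?case using S10 by simp
    next
      case (Suc k)
      show ?case
      proof
        assume kn: "Suc k \<le> n"
        then have pk: "S1 k > 0" using Suc by simp
        have k1: "Suc k \<in> {1..n}" using kn by simp
        show "S1 (Suc k) > 0"
        proof (rule ccontr)
          assume "\<not> S1 (Suc k) > 0"
          then have z: "S1 (Suc k) = 0" using nn[OF k1] by simp
          have "S0 (Suc k) * S1 k = 0" using ss[OF k1] z by simp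
          then have s0: "S0 (Suc k) = 0" using pk by simp
          have y: "Y0 (Suc k) = 0" "Y1 (Suc k) = 0" using ss[OF k1] z by auto
          have "(if Suc k < n then Y0 (Suc k + 1) else 0) = 0"
          proof (cases "Suc k < n")
            case True
            then have k2: "Suc k + 1 \<in> {1..n}" by simp
            have "S1 (Suc k + 1) = 0" using zero[OF k2] z by simp
            then show ?thesis using ss[OF k2] True by simp
          qed simp
          then have "Sbar (Suc k) = 0" using ss[OF k1] s0 z y by simp
          then show False using nn[OF k1] by simp
        qed
      qed
    qed
  qed
  then show S1p: "\<forall>k\<le>n. S1 k > 0" by blast
  show "\<forall>k\<in>{1..n}. S0 k > 0"
  proof
    fix k assume k: "k\<in>{1..n}"
    have "lambda a0 b0 c0 a1 b1 c1 k * F k * S1 k > 0" using cp[OF k] Fp k S1p k by simp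
    then have "S0 k * S1 (k-1) > 0" using ss[OF k] by simp
    then have "S0 k \<noteq> 0" by auto
    then show "S0 k > 0" using nn[OF k] by simp
  qed
qed


theorem mainTheorem7:
  fixes n i :: nat
    and a0 b0 c0 a1 b1 c1 :: "nat \<Rightarrow> real"
    and Ebar :: real and Fbar Sbar Sbar' :: "nat \<Rightarrow> real"
    and S0 S1 F Y0 Y1 S0' S1' F' Y0' Y1' :: "nat \<Rightarrow> real"
  assumes "n \<ge> 1" and "i \<in> {1..n}"
    and "\<forall>k\<in>{1..n}. a0 k > 0 \<and> b0 k > 0 \<and> c0 k > 0 \<and> a1 k > 0 \<and> b1 k > 0 \<and> c1 k > 0"
    and "\<forall>k\<in>{1..n}. k \<noteq> i \<longrightarrow> Sbar' k = Sbar k"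
    and "Sbar i < Sbar' i"
    and "is_BMSS n a0 b0 c0 a1 b1 c1 Ebar Fbar Sbar S0 S1 F Y0 Y1"
    and "is_BMSS n a0 b0 c0 a1 b1 c1 Ebar Fbar Sbar' S0' S1' F' Y0' Y1'"
  shows "\<forall>j\<in>{i..n}. S1 j < S1' j \<and> Y0 j < Y0' j \<and> Y1 j < Y1' j"
proof -
  note n1 = assms(1) and iin = assms(2) and rc = assms(3) and sbe = assms(4) and sbi = assms(5)
  note B = assms(6) and B' = assms(7)
  define g where "g = gamma c0 a1 b1 c1"
  define d where "d = delta a1 b1 c1"
  define l where "l = lambda a0 b0 c0 a1 b1 c1"
  define P where "P k = F k * S1 k" for k
  define P' where "P' k = F' k * S1' k" for k
  define T where "T k = (if k < n then g (k+1) * P (k+1) else 0)" for k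
  define T' where "T' k = (if k < n then g (k+1) * P' (k+1) else 0)" for k
  have cp: "\<And>k. k\<in>{1..n} \<Longrightarrow> d k > 0 \<and> g k > 0 \<and> l k > 0"
  proof -
    fix k assume "k\<in>{1..n}"
    then have h: "a0 k > 0" "b0 k > 0" "c0 k > 0" "a1 k > 0" "b1 k > 0" "c1 k > 0" using rc by auto
    show "d k > 0 \<and> g k > 0 \<and> l k > 0"
      using consts_pos[where p=a0 and q=b0 and r=c0 and u=a1 and v=b1 and w=c1 and k=k, OF h] unfolding g_def d_def l_def by simp
  qed
  have ss: "\<And>k. k\<in>{1..n} \<Longrightarrow> Y0 k = g k * F k * S1 k \<and>
        Y1 k = d k * F k * S1 k \<and>
        l k * F k * S1 k = S0 k * S1 (k - 1) \<and>
        Fbar k = F k + Y1 k \<and>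
        Sbar k = S0 k + S1 k + Y0 k + Y1 k + (if k < n then Y0 (k + 1) else 0)"
    using bspec[OF conjunct1[OF B[unfolded is_BMSS_def, THEN conjunct1, unfolded steady_state_def]]]
    unfolding g_def d_def l_def by blast
  have ss': "\<And>k. k\<in>{1..n} \<Longrightarrow> Y0' k = g k * F' k * S1' k \<and>
        Y1' k = d k * F' k * S1' k \<and>
        l k * F' k * S1' k = S0' k * S1' (k - 1) \<and>
        Fbar k = F' k + Y1' k \<and>
        Sbar' k = S0' k + S1' k + Y0' k + Y1' k + (if k < n then Y0' (k + 1) else 0)"
    using bspec[OF conjunct1[OF B'[unfolded is_BMSS_def, THEN conjunct1, unfolded steady_state_def]]]
    unfolding g_def d_def l_def by blast
  have E: "Ebar = S1 0 + Y0 1" using conjunct2[OF B[unfolded is_BMSS_def, THEN conjunct1, unfolded steady_state_def]] .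
  have E': "Ebar = S1' 0 + Y0' 1" using conjunct2[OF B'[unfolded is_BMSS_def, THEN conjunct1, unfolded steady_state_def]] .
  have Fbp: "\<And>k. k\<in>{1..n} \<Longrightarrow> Fbar k > 0" using B[unfolded is_BMSS_def] by blast
  have pF: "\<forall>k\<in>{1..n}. F k > 0" "\<forall>k\<le>n. S1 k > 0" "\<forall>k\<in>{1..n}. S0 k > 0"
    using bmss_pos[OF B n1 rc] by auto
  have pF': "\<forall>k\<in>{1..n}. F' k > 0" "\<forall>k\<le>n. S1' k > 0" "\<forall>k\<in>{1..n}. S0' k > 0"
    using bmss_pos[OF B' n1 rc] by auto
  have eqA: "\<And>k. k\<in>{1..n} \<Longrightarrow> l k * P k = S0 k * S1 (k-1)"
    using ss unfolding P_def by (simp add: mult.assoc)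
  have eqA': "\<And>k. k\<in>{1..n} \<Longrightarrow> l k * P' k = S0' k * S1' (k-1)"
    using ss' unfolding P'_def by (simp add: mult.assoc)
  have eqB: "\<And>k. k\<in>{1..n} \<Longrightarrow> Sbar k = S0 k + S1 k + (g k + d k) * P k + T k"
  proof -
    fix k assume k: "k\<in>{1..n}"
    have "(if k < n then Y0 (k + 1) else 0) = T k"
    proof (cases "k < n")
      case True
      then have "k+1 \<in> {1..n}" by simp
      then show ?thesis using ss True unfolding T_def P_def by (simp add: mult.assoc)
    qed (simp add: T_def)
    then show "Sbar k = S0 k + S1 k + (g k + d k) * P k + T k"
      using ss[OF k] unfolding P_def by (simp add: algebra_simps)
  qed
  have eqB': "\<And>k. k\<in>{1..n} \<Longrightarrow> Sbar' k = S0' k + S1' k + (g k + d k) * P' k + T' k"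
  proof -
    fix k assume k: "k\<in>{1..n}"
    have "(if k < n then Y0' (k + 1) else 0) = T' k"
    proof (cases "k < n")
      case True
      then have "k+1 \<in> {1..n}" by simp
      then show ?thesis using ss' True unfolding T'_def P'_def by (simp add: mult.assoc)
    qed (simp add: T'_def)
    then show "Sbar' k = S0' k + S1' k + (g k + d k) * P' k + T' k"
      using ss'[OF k] unfolding P'_def by (simp add: algebra_simps)
  qed
  have mono: "\<And>k. k\<in>{1..n} \<Longrightarrow> (P k \<le> P' k \<longleftrightarrow> S1 k \<le> S1' k) \<and> (P k < P' k \<longleftrightarrow> S1 k < S1' k)
     \<and> (P' k \<le> P k \<longleftrightarrow> S1' k \<le> S1 k) \<and> (P' k < P k \<longleftrightarrow> S1' k < S1 k)"
  proof -
    fix k assume k: "k\<in>{1..n}"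
    have f1: "Fbar k = F k + d k * F k * S1 k" using ss[OF k] by simp
    have f2: "Fbar k = F' k + d k * F' k * S1' k" using ss'[OF k] by simp
    have x: "S1 k \<ge> 0" "S1' k \<ge> 0" using pF(2) pF'(2) k by auto
    show "?thesis k" unfolding P_def P'_def
      using FS_mono[OF f1 f2 _ x _] FS_mono[OF f2 f1 _ x(2) x(1) _] cp[OF k] Fbp[OF k] by auto
  qed
  have cpos: "\<And>k. k\<in>{1..n} \<Longrightarrow> g k + d k > 0" using cp by (simp add: add_pos_pos)
  define Q where "Q k = ((S1 (k-1) \<le> S1' (k-1) \<longrightarrow> S1 k \<le> S1' k) \<and> (S1 (k-1) < S1' (k-1) \<longrightarrow> S1 k < S1' k)
      \<and> (S1' (k-1) \<le> S1 (k-1) \<longrightarrow> S1' k \<le> S1 k) \<and> (S1' (k-1) < S1 (k-1) \<longrightarrow> S1' k < S1 k))" for k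
  have Qstep: "\<And>k. k\<in>{i+1..n} \<Longrightarrow> (S1' k \<le> S1 k \<longrightarrow> T' k \<le> T k) \<Longrightarrow> (S1 k \<le> S1' k \<longrightarrow> T k \<le> T' k) \<Longrightarrow> Q k"
  proof -
    fix k assume kk: "k\<in>{i+1..n}" and t1: "S1' k \<le> S1 k \<longrightarrow> T' k \<le> T k" and t2: "S1 k \<le> S1' k \<longrightarrow> T k \<le> T' k"
    have k: "k \<in> {1..n}" using kk by simp
    have sb: "Sbar k = Sbar' k" using sbe kk by simp
    have y: "S1 (k-1) > 0" "S1' (k-1) > 0" using pF(2) pF'(2) k by auto
    have s0: "S0 k > 0" "S0' k > 0" using pF(3) pF'(3) k by auto
    note m = mono[OF k]
    have c: "l k > 0" "g k + d k > 0" using cp[OF k] cpos[OF k] by auto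
    have sl: "Sbar k \<le> Sbar' k" "Sbar' k \<le> Sbar k" using sb by auto
    have q1: "S1 (k-1) \<le> S1' (k-1) \<longrightarrow> S1 k \<le> S1' k"
    proof (rule impI, rule ccontr)
      assume a: "S1 (k-1) \<le> S1' (k-1)" "\<not> S1 k \<le> S1' k"
      have xl: "S1' k < S1 k" using a(2) by simp
      have pl: "P' k \<le> P k" using m xl by simp
      have tl: "T' k \<le> T k" using t1 xl by simp
      show False
        by (rule core[OF c(1) c(2) sl(1) eqB[OF k] eqB'[OF k] eqA[OF k] eqA'[OF k] s0(1) y(1)
             less_imp_le[OF xl] pl tl a(1) disjI2[OF disjI1[OF xl]]])
    qed
    have q2: "S1 (k-1) < S1' (k-1) \<longrightarrow> S1 k < S1' k"
    proof (rule impI, rule ccontr)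
      assume a: "S1 (k-1) < S1' (k-1)" "\<not> S1 k < S1' k"
      have xl: "S1' k \<le> S1 k" using a(2) by simp
      have pl: "P' k \<le> P k" using m xl by simp
      have tl: "T' k \<le> T k" using t1 xl by simp
      show False
        by (rule core[OF c(1) c(2) sl(1) eqB[OF k] eqB'[OF k] eqA[OF k] eqA'[OF k] s0(1) y(1)
             xl pl tl less_imp_le[OF a(1)] disjI2[OF disjI2[OF disjI2[OF a(1)]]]])
    qed
    have q3: "S1' (k-1) \<le> S1 (k-1) \<longrightarrow> S1' k \<le> S1 k"
    proof (rule impI, rule ccontr)
      assume a: "S1' (k-1) \<le> S1 (k-1)" "\<not> S1' k \<le> S1 k"
      have xl: "S1 k < S1' k" using a(2) by simp
      have pl: "P k \<le> P' k" using m xl by simp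
      have tl: "T k \<le> T' k" using t2 xl by simp
      show False
        by (rule core[OF c(1) c(2) sl(2) eqB'[OF k] eqB[OF k] eqA'[OF k] eqA[OF k] s0(2) y(2)
             less_imp_le[OF xl] pl tl a(1) disjI2[OF disjI1[OF xl]]])
    qed
    have q4: "S1' (k-1) < S1 (k-1) \<longrightarrow> S1' k < S1 k"
    proof (rule impI, rule ccontr)
      assume a: "S1' (k-1) < S1 (k-1)" "\<not> S1' k < S1 k"
      have xl: "S1 k \<le> S1' k" using a(2) by simp
      have pl: "P k \<le> P' k" using m xl by simp
      have tl: "T k \<le> T' k" using t2 xl by simp
      show False
        by (rule core[OF c(1) c(2) sl(2) eqB'[OF k] eqB[OF k] eqA'[OF k] eqA[OF k] s0(2) y(2)
             xl pl tl less_imp_le[OF a(1)] disjI2[OF disjI2[OF disjI2[OF a(1)]]]])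
    qed
    show "Q k" unfolding Q_def using q1 q2 q3 q4 by blast
  qed
  have Qall: "\<And>k. k\<in>{i+1..n} \<Longrightarrow> Q k"
  proof -
    fix k assume kk: "k\<in>{i+1..n}"
    then have "k \<le> n" by simp
    then show "Q k"
    proof (induction rule: inc_induct)
      case base
      show ?case using kk by (intro Qstep) (auto simp: T_def T'_def)
    next
      case (step m)
      have mk: "m \<in> {i+1..n}" using step kk by auto
      have m1: "Suc m \<in> {1..n}" using step by auto
      have qs: "Q (Suc m)" by fact
      have t1: "S1' m \<le> S1 m \<longrightarrow> T' m \<le> T m"
      proof
        assume "S1' m \<le> S1 m"
        then have "S1' (Suc m) \<le> S1 (Suc m)" using qs unfolding Q_def by simp
        then have "P' (Suc m) \<le> P (Suc m)" using mono[OF m1] by simp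
        then show "T' m \<le> T m" unfolding T_def T'_def using step cp[OF m1] by simp
      qed
      have t2: "S1 m \<le> S1' m \<longrightarrow> T m \<le> T' m"
      proof
        assume "S1 m \<le> S1' m"
        then have "S1 (Suc m) \<le> S1' (Suc m)" using qs unfolding Q_def by simp
        then have "P (Suc m) \<le> P' (Suc m)" using mono[OF m1] by simp
        then show "T m \<le> T' m" unfolding T_def T'_def using step cp[OF m1] by simp
      qed
      show ?case using Qstep[OF mk t1 t2] .
    qed
  qed
  define U where "U k = ((P' (k+1) \<le> P (k+1) \<longrightarrow> S1 k \<le> S1' k) \<and> (P' (k+1) < P (k+1) \<longrightarrow> S1 k < S1' k))" for k
  have Uall: "\<And>k. k < i \<Longrightarrow> U k"
  proof -
    fix k show "k < i \<Longrightarrow> U k"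
    proof (induction k)
      case 0
      have g1: "g 1 > 0" using cp n1 by auto
      have e1: "Ebar = S1 0 + g 1 * P 1" using E ss[of 1] n1 unfolding P_def by (simp add: mult.assoc)
      have e2: "Ebar = S1' 0 + g 1 * P' 1" using E' ss'[of 1] n1 unfolding P'_def by (simp add: mult.assoc)
      have m1: "P' 1 \<le> P 1 \<Longrightarrow> g 1 * P' 1 \<le> g 1 * P 1" using g1 by simp
      have m2: "P' 1 < P 1 \<Longrightarrow> g 1 * P' 1 < g 1 * P 1" using g1 by simp
      show ?case unfolding U_def using e1 e2 m1 m2 by fastforce
    next
      case (Suc k)
      have IH: "U k" using Suc by simp
      define j where "j = Suc k"
      have j: "j \<in> {1..n}" "j < n" "j \<noteq> i" using Suc iin unfolding j_def by auto
      have sb: "Sbar j = Sbar' j" using sbe j by simp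
      have jm: "j - 1 = k" "k + 1 = j" unfolding j_def by auto
      have y: "S1 (j-1) > 0" "S1' (j-1) > 0" using pF(2) pF'(2) j by auto
      have s0: "S0 j > 0" "S0' j > 0" using pF(3) pF'(3) j by auto
      note m = mono[OF j(1)]
      have c: "l j > 0" "g j + d j > 0" using cp[OF j(1)] cpos[OF j(1)] by auto
      have j1: "j + 1 \<in> {1..n}" using j by simp
      have gj: "g (j+1) > 0" using cp[OF j1] by simp
      have Tj: "T j = g (j+1) * P (j+1)" "T' j = g (j+1) * P' (j+1)" using j unfolding T_def T'_def by auto
      have IH': "(P' j \<le> P j \<longrightarrow> S1 (j-1) \<le> S1' (j-1)) \<and> (P' j < P j \<longrightarrow> S1 (j-1) < S1' (j-1))"
        using IH unfolding U_def jm by simp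
      have sl: "Sbar j \<le> Sbar' j" using sb by simp
      have u1: "P' (j+1) \<le> P (j+1) \<longrightarrow> S1 j \<le> S1' j"
      proof (rule impI, rule ccontr)
        assume a: "P' (j+1) \<le> P (j+1)" "\<not> S1 j \<le> S1' j"
        have tl: "T' j \<le> T j" using a(1) gj Tj by simp
        have xl: "S1' j < S1 j" using a(2) by simp
        have pl: "P' j < P j" using m xl by simp
        have yl: "S1 (j-1) < S1' (j-1)" using IH' pl by blast
        show False
          by (rule core[OF c(1) c(2) sl eqB[OF j(1)] eqB'[OF j(1)] eqA[OF j(1)] eqA'[OF j(1)] s0(1) y(1)
             less_imp_le[OF xl] less_imp_le[OF pl] tl less_imp_le[OF yl] disjI2[OF disjI1[OF xl]]])
      qed
      have u2: "P' (j+1) < P (j+1) \<longrightarrow> S1 j < S1' j"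
      proof (rule impI, rule ccontr)
        assume a: "P' (j+1) < P (j+1)" "\<not> S1 j < S1' j"
        have tl: "T' j < T j" using a(1) gj Tj by simp
        have xl: "S1' j \<le> S1 j" using a(2) by simp
        have pl: "P' j \<le> P j" using m xl by simp
        have yl: "S1 (j-1) \<le> S1' (j-1)" using IH' pl by blast
        show False
          by (rule core[OF c(1) c(2) sl eqB[OF j(1)] eqB'[OF j(1)] eqA[OF j(1)] eqA'[OF j(1)] s0(1) y(1)
             xl pl less_imp_le[OF tl] yl disjI2[OF disjI2[OF disjI1[OF tl]]]])
      qed
      show ?case unfolding U_def using u1 u2 unfolding j_def by simp
    qed
  qed
  have xi: "S1 i < S1' i"
  proof (rule ccontr)
    assume a: "\<not> S1 i < S1' i"
    have k: "i \<in> {1..n}" using iin .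
    note m = mono[OF k]
    have y: "S1 (i-1) > 0" using pF(2) k by auto
    have s0: "S0 i > 0" using pF(3) k by auto
    have c: "l i > 0" "g i + d i > 0" using cp[OF k] cpos[OF k] by auto
    have Pi: "P' i \<le> P i" using a m by simp
    have "U (i-1)" using Uall k by simp
    then have yy: "S1 (i-1) \<le> S1' (i-1)" using Pi k unfolding U_def by simp
    have tt: "T' i \<le> T i"
    proof (cases "i < n")
      case True
      then have k1: "i+1 \<in> {i+1..n}" "i+1 \<in> {1..n}" by auto
      have "S1' (i+1) \<le> S1 (i+1)" using Qall[OF k1(1)] a unfolding Q_def by simp
      then have "P' (i+1) \<le> P (i+1)" using mono[OF k1(2)] by simp
      then show ?thesis unfolding T_def T'_def using True cp[OF k1(2)] by simp
    qed (simp add: T_def T'_def)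
    have xl: "S1' i \<le> S1 i" using a by simp
    show False
      by (rule core[OF c(1) c(2) less_imp_le[OF sbi] eqB[OF k] eqB'[OF k] eqA[OF k] eqA'[OF k] s0 y
           xl Pi tt yy disjI1[OF sbi]])
  qed
  have chain: "\<And>j. i \<le> j \<Longrightarrow> j \<le> n \<Longrightarrow> S1 j < S1' j"
  proof -
    fix j show "i \<le> j \<Longrightarrow> j \<le> n \<Longrightarrow> S1 j < S1' j"
    proof (induction j)
      case 0 then show ?case using iin by simp
    next
      case (Suc j)
      show ?case
      proof (cases "i = Suc j")
        case True then show ?thesis using xi by simp
      next
        case False
        then have "S1 j < S1' j" using Suc by simp
        moreover have "Suc j \<in> {i+1..n}" using Suc False by auto
        ultimately show ?thesis using Qall unfolding Q_def by fastforce
      qed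
    qed
  qed
  show ?thesis
  proof
    fix j assume jj: "j \<in> {i..n}"
    have j: "j \<in> {1..n}" using jj iin by auto
    have x: "S1 j < S1' j" using chain jj by simp
    then have p: "P j < P' j" using mono[OF j] by simp
    have "Y0 j = g j * P j" "Y0' j = g j * P' j" "Y1 j = d j * P j" "Y1' j = d j * P' j"
      using ss[OF j] ss'[OF j] unfolding P_def P'_def by (simp_all add: mult.assoc)
    then show "S1 j < S1' j \<and> Y0 j < Y0' j \<and> Y1 j < Y1' j" using x p cp[OF j] by simp
  qed
qed

end
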